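(* Let $\kappa$ be a compact cardinal and let $\lambda\geq\kappa$ be a regular cardinal. Then there is no $\kappa$-regressive weak $\lambda$-Kurepa-tree.
   Context: A cardinal $\kappa$ is $\lambda$-compact if there is a $\kappa$-complete fine ultrafilter on $\mathcal{P}_\kappa\lambda=\{x\subseteq\lambda:|x|<\kappa\}$ (fine: for each $\alpha<\lambda$, $\{x:\alpha\in x\}$ is in the ultrafilter); $\kappa$ is compact if it is $\lambda$-compact for all $\lambda$. Trees are trees of functions: a tree $T$ is a set of functions whose domains are ordinals, closed under restriction, ordered by extension $\leq_T$; $T_\alpha$ is the set of elements with domain $\alpha$ and $T_{<\alpha}=\bigcup_{\xi<\alpha}T_\xi$. For a limit $\alpha$, $T_\alpha$ is non-stationary over $T_{<\alpha}$ if there is $f:T_\alpha\to T_{<\alpha}$ with $f(x)<_T x$ for all $x$ and, for distinct $x,y\in T_\alpha$, $f(x)\not<_T y$ or $f(y)\not<_T x$. A tree $T$ of height $\lambda$ is $\kappa$-regressive if $T_\alpha$ is non-stationary over $T_{<\alpha}$ for every limit $\alpha<\lambda$ with $\mathrm{cf}(\alpha)<\kappa$. A weak $\lambda$-Kurepa-tree is a tree of height $\lambda$ each of whose levels has size $\leq\lambda$ and which has $\lambda^+$ many cofinal branches. *)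

theory Defs
  imports Main
begin

definition card_le :: "'a set \<Rightarrow> 'b set \<Rightarrow> bool" where
  "card_le A B \<longleftrightarrow> (\<exists>f. inj_on f A \<and> f ` A \<subseteq> B)"

definition card_lt :: "'a set \<Rightarrow> 'b set \<Rightarrow> bool" where
  "card_lt A B \<longleftrightarrow> card_le A B \<and> \<not> card_le B A"

text \<open>Ordinals are modelled as elements of a well-ordered type 'o; the ordinal
  alpha is identified with the initial segment {..<alpha}.\<close>

definition is_cardinal :: "'o::wellorder \<Rightarrow> bool" where
  "is_cardinal k \<longleftrightarrow> (\<forall>b<k. card_lt {..<b} {..<k})"

definition is_limit :: "'o::wellorder \<Rightarrow> bool" where
  "is_limit a \<longleftrightarrow> (\<exists>b. b < a) \<and> (\<forall>b<a. \<exists>c. b < c \<and> c < a)"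

definition cofinal_in :: "'o::wellorder set \<Rightarrow> 'o \<Rightarrow> bool" where
  "cofinal_in C a \<longleftrightarrow> C \<subseteq> {..<a} \<and> (\<forall>b<a. \<exists>c\<in>C. b \<le> c)"

definition cf_less :: "'o::wellorder \<Rightarrow> 'o \<Rightarrow> bool" where
  "cf_less a k \<longleftrightarrow> (\<exists>C. cofinal_in C a \<and> card_lt C {..<k})"

definition regular_cardinal :: "'o::wellorder \<Rightarrow> bool" where
  "regular_cardinal l \<longleftrightarrow> is_cardinal l \<and> (\<exists>b. b < l) \<and>
     (\<forall>C. cofinal_in C l \<longrightarrow> card_le {..<l} C)"

definition uncountable_ord :: "'o::wellorder \<Rightarrow> bool" where
  "uncountable_ord k \<longleftrightarrow> \<not> card_le {..<k} (UNIV :: nat set)"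

definition P_kappa :: "'o::wellorder \<Rightarrow> 'b set \<Rightarrow> 'b set set" where
  "P_kappa k X = {x. x \<subseteq> X \<and> card_lt x {..<k}}"

definition ultrafilter_on :: "'c set \<Rightarrow> 'c set set \<Rightarrow> bool" where
  "ultrafilter_on S U \<longleftrightarrow> U \<subseteq> Pow S \<and> S \<in> U \<and> {} \<notin> U \<and>
     (\<forall>A B. A \<in> U \<and> A \<subseteq> B \<and> B \<subseteq> S \<longrightarrow> B \<in> U) \<and>
     (\<forall>A B. A \<in> U \<and> B \<in> U \<longrightarrow> A \<inter> B \<in> U) \<and>
     (\<forall>A. A \<subseteq> S \<longrightarrow> A \<in> U \<or> S - A \<in> U)"

definition complete_filter :: "'o::wellorder \<Rightarrow> 'c set set \<Rightarrow> bool" where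
  "complete_filter k U \<longleftrightarrow>
     (\<forall>\<A>. \<A> \<subseteq> U \<and> \<A> \<noteq> {} \<and> card_lt \<A> {..<k} \<longrightarrow> \<Inter>\<A> \<in> U)"

text \<open>k is X-compact: a k-complete fine ultrafilter on P_k(X). (For X = lambda
  this is lambda-compactness; the notion only depends on the cardinality of X.)\<close>
definition set_compact :: "'o::wellorder \<Rightarrow> 'b set \<Rightarrow> bool" where
  "set_compact k X \<longleftrightarrow> (\<exists>U. ultrafilter_on (P_kappa k X) U \<and> complete_filter k U \<and>
      (\<forall>a\<in>X. {x \<in> P_kappa k X. a \<in> x} \<in> U))"

text \<open>Nodes are partial maps 'o => 'a option whose domain is an ordinal.\<close>

definition is_tree :: "('o::wellorder \<Rightarrow> 'a option) set \<Rightarrow> bool" where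
  "is_tree T \<longleftrightarrow> (\<forall>f\<in>T. \<exists>a. dom f = {..<a}) \<and>
     (\<forall>f\<in>T. \<forall>b. {..<b} \<subseteq> dom f \<longrightarrow> f |` {..<b} \<in> T)"

definition tree_less :: "('o \<Rightarrow> 'a option) \<Rightarrow> ('o \<Rightarrow> 'a option) \<Rightarrow> bool" where
  "tree_less f g \<longleftrightarrow> f \<subseteq>\<^sub>m g \<and> f \<noteq> g"

definition level :: "('o::wellorder \<Rightarrow> 'a option) set \<Rightarrow> 'o \<Rightarrow> ('o \<Rightarrow> 'a option) set" where
  "level T a = {f \<in> T. dom f = {..<a}}"

definition below :: "('o::wellorder \<Rightarrow> 'a option) set \<Rightarrow> 'o \<Rightarrow> ('o \<Rightarrow> 'a option) set" where
  "below T a = {f \<in> T. \<exists>b<a. dom f = {..<b}}"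

definition level_nonstationary :: "('o::wellorder \<Rightarrow> 'a option) set \<Rightarrow> 'o \<Rightarrow> bool" where
  "level_nonstationary T a \<longleftrightarrow> (\<exists>F. (\<forall>x\<in>level T a. F x \<in> below T a \<and> tree_less (F x) x) \<and>
     (\<forall>x\<in>level T a. \<forall>y\<in>level T a. x \<noteq> y \<longrightarrow>
        \<not> tree_less (F x) y \<or> \<not> tree_less (F y) x))"

definition has_height :: "('o::wellorder \<Rightarrow> 'a option) set \<Rightarrow> 'o \<Rightarrow> bool" where
  "has_height T l \<longleftrightarrow> (\<forall>f\<in>T. \<exists>a<l. dom f = {..<a}) \<and> (\<forall>a<l. level T a \<noteq> {})"

definition regressive :: "'o::wellorder \<Rightarrow> ('o \<Rightarrow> 'a option) set \<Rightarrow> 'o \<Rightarrow> bool" where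
  "regressive k T l \<longleftrightarrow> is_tree T \<and> has_height T l \<and>
     (\<forall>a<l. is_limit a \<and> cf_less a k \<longrightarrow> level_nonstationary T a)"

definition cofinal_branches :: "('o::wellorder \<Rightarrow> 'a option) set \<Rightarrow> 'o \<Rightarrow> ('o \<Rightarrow> 'a option) set" where
  "cofinal_branches T l = {b. dom b = {..<l} \<and> (\<forall>a<l. b |` {..<a} \<in> T)}"

definition weak_kurepa :: "('o::wellorder \<Rightarrow> 'a option) set \<Rightarrow> 'o \<Rightarrow> bool" where
  "weak_kurepa T l \<longleftrightarrow> is_tree T \<and> has_height T l \<and>
     (\<forall>a<l. card_le (level T a) {..<l}) \<and> card_lt {..<l} (cofinal_branches T l)"

end

theory Submission imports Defs begin

lemma card_le_trans: "card_le A B \<Longrightarrow> card_le B C \<Longrightarrow> card_le A C"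
proof -
  assume "card_le A B" "card_le B C"
  then obtain f g where f: "inj_on f A" "f ` A \<subseteq> B" and g: "inj_on g B" "g ` B \<subseteq> C"
    unfolding card_le_def by (elim exE conjE)
  have "inj_on (g \<circ> f) A" using f g by (intro comp_inj_on) (auto intro: inj_on_subset)
  moreover have "(g \<circ> f) ` A \<subseteq> C" using f g by auto
  ultimately show ?thesis unfolding card_le_def by (intro exI[of _ "g \<circ> f"]) simp
qed

lemma card_le_subset: "A \<subseteq> B \<Longrightarrow> card_le A B"
  unfolding card_le_def by (rule exI[of _ id]) auto

lemma card_le_lt_trans: "card_le A B \<Longrightarrow> card_lt B C \<Longrightarrow> card_lt A C"
proof -
  assume ab: "card_le A B" and bc: "card_lt B C"
  have "card_le A C" using ab bc unfolding card_lt_def by (intro card_le_trans[OF ab]) simp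
  moreover have "\<not> card_le C A"
  proof
    assume "card_le C A"
    then have "card_le C B" by (rule card_le_trans[OF _ ab])
    then show False using bc unfolding card_lt_def by simp
  qed
  ultimately show ?thesis unfolding card_lt_def by simp
qed

lemma card_le_finite_nat: "finite A \<Longrightarrow> card_le A (UNIV::nat set)"
proof -
  assume "finite A"
  then obtain f :: "_ \<Rightarrow> nat" and n where "f ` A = {i. i < n} \<and> inj_on f A"
    using finite_imp_inj_to_nat_seg by blast
  then have "inj_on f A \<and> f ` A \<subseteq> UNIV" by simp
  then show ?thesis unfolding card_le_def by (rule exI[of _ f])
qed

lemma card_le_range_nat: "card_le (range (A::nat \<Rightarrow> 'b)) (UNIV::nat set)"
proof -
  have "inj_on (inv A) (range A)" by (rule inj_on_inv_into) simp
  then show ?thesis unfolding card_le_def by (intro exI[of _ "inv A"]) simp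
qed

lemma card_le_square: "\<not> finite A \<Longrightarrow> card_le (A \<times> A) A"
proof -
  assume "\<not> finite A"
  then have "(card_of (A \<times> A), card_of A) \<in> ordIso" by (rule card_of_Times_same_infinite)
  then have "\<exists>f. bij_betw f (A \<times> A) A" by (rule card_of_ordIso[THEN iffD2])
  then obtain f where "bij_betw f (A \<times> A) A" by (elim exE)
  then have "inj_on f (A \<times> A) \<and> f ` (A \<times> A) \<subseteq> A" unfolding bij_betw_def by simp
  then show ?thesis unfolding card_le_def by (rule exI[of _ f])
qed

lemma card_le_nat_inf: "\<not> finite A \<Longrightarrow> card_le (UNIV::nat set) A"
proof -
  assume "\<not> finite A"
  then obtain f :: "nat \<Rightarrow> _" where "inj f \<and> range f \<subseteq> A"
    using infinite_countable_subset by blast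
  then show ?thesis unfolding card_le_def by (rule exI[of _ f])
qed

theorem theorem7:
  fixes k l :: "'o::wellorder"
    and T :: "('o \<Rightarrow> 'a option) set"
  assumes "is_cardinal k" and "uncountable_ord k"
    and "\<And>X :: ('o \<Rightarrow> 'a option) set. set_compact k X"
    and "k \<le> l" and "regular_cardinal l"
  shows "\<not> (regressive k T l \<and> weak_kurepa T l)"
proof
  note ku = assms(2) and cpt = assms(3) and kl = assms(4) and lreg = assms(5)
  assume H: "regressive k T l \<and> weak_kurepa T l"
  have R1: "is_tree T \<and> has_height T l \<and> (\<forall>a<l. is_limit a \<and> cf_less a k \<longrightarrow> level_nonstationary T a)"
    using conjunct1[OF H] unfolding regressive_def .
  have W1: "is_tree T \<and> has_height T l \<and> (\<forall>a<l. card_le (level T a) {..<l}) \<and> card_lt {..<l} (cofinal_branches T l)"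
    using conjunct2[OF H] unfolding weak_kurepa_def .
  have height: "has_height T l" using R1 by (elim conjE)
  have reg: "\<forall>a<l. is_limit a \<and> cf_less a k \<longrightarrow> level_nonstationary T a" using R1 by (elim conjE)
  have levs: "\<forall>a<l. card_le (level T a) {..<l}" using W1 by (elim conjE)
  have br: "card_lt {..<l} (cofinal_branches T l)" using W1 by (elim conjE)
  have kl_le: "card_le {..<k} {..<l}" using kl by (intro card_le_subset) auto
  have l_unc: "\<not> card_le {..<l} (UNIV::nat set)"
    using ku card_le_trans[OF kl_le] unfolding uncountable_ord_def by blast
  have l_inf: "\<not> finite {..<l}" using l_unc card_le_finite_nat by blast
  have k_inf: "\<not> finite {..<k}" using ku card_le_finite_nat unfolding uncountable_ord_def by blast
  have lne: "\<exists>b. b < l" using lreg unfolding regular_cardinal_def by blast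
  have lim: "\<exists>a'. a < a' \<and> a' < l" if "a < l" for a
  proof (rule ccontr)
    assume "\<not> ?thesis"
    then have "cofinal_in {a} l" using that unfolding cofinal_in_def by (auto simp: not_less)
    then have "card_le {..<l} {a}" using lreg unfolding regular_cardinal_def by blast
    then have "card_le {..<l} (UNIV::nat set)" using card_le_finite_nat[of "{a}"] by (intro card_le_trans[OF _ card_le_finite_nat[of "{a}"]]) auto
    then show False using l_unc by blast
  qed
  define t where "t \<alpha> = (SOME f. f \<in> level T \<alpha>)" for \<alpha>
  have t_lev: "t \<alpha> \<in> level T \<alpha>" if "\<alpha> < l" for \<alpha>
  proof -
    have "level T \<alpha> \<noteq> {}" using height that unfolding has_height_def by blast
    then show ?thesis unfolding t_def by (simp add: some_in_eq)
  qed
  have t_dom: "dom (t \<alpha>) = {..<\<alpha>}" if "\<alpha> < l" for \<alpha>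
    using t_lev[OF that] unfolding level_def by auto
  have t_inj: "inj_on t {..<l}"
  proof (rule inj_onI)
    fix a b assume "a \<in> {..<l}" "b \<in> {..<l}" "t a = t b"
    then have "{..<a} = {..<b}" using t_dom by (metis lessThan_iff)
    then show "a = b" by simp
  qed
  define X where "X = t ` {..<l}"
  define P where "P = P_kappa k X"
  obtain U where uf: "ultrafilter_on P U" and comp: "complete_filter k U"
      and fine: "\<forall>a\<in>X. {x \<in> P. a \<in> x} \<in> U"
    using cpt[of X] unfolding set_compact_def P_def by blast
  have emp: "{} \<notin> U" and uf_P: "P \<in> U"
    and uf_up: "\<And>A B. A \<in> U \<Longrightarrow> A \<subseteq> B \<Longrightarrow> B \<subseteq> P \<Longrightarrow> B \<in> U"
    and uf_int: "\<And>A B. A \<in> U \<Longrightarrow> B \<in> U \<Longrightarrow> A \<inter> B \<in> U"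
    and uf_compl: "\<And>A. A \<subseteq> P \<Longrightarrow> A \<in> U \<or> P - A \<in> U"
    using uf unfolding ultrafilter_on_def by blast+
  define ae where "ae Q \<longleftrightarrow> {x \<in> P. Q x} \<in> U" for Q
  have ae_conj: "ae (\<lambda>x. A x \<and> B x)" if "ae A" "ae B" for A B
  proof -
    have "{x \<in> P. A x} \<inter> {x \<in> P. B x} \<in> U" using uf_int that unfolding ae_def by blast
    moreover have "{x \<in> P. A x} \<inter> {x \<in> P. B x} = {x \<in> P. A x \<and> B x}" by blast
    ultimately show ?thesis unfolding ae_def by simp
  qed
  have ae_mono: "ae B" if "ae A" "\<And>x. x \<in> P \<Longrightarrow> A x \<Longrightarrow> B x" for A B
  proof -
    have "{x \<in> P. A x} \<subseteq> {x \<in> P. B x}" using that(2) by blast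
    moreover have "{x \<in> P. B x} \<subseteq> P" by blast
    ultimately show ?thesis using uf_up that(1) unfolding ae_def by blast
  qed
  have ae_ex: "\<exists>x\<in>P. A x" if "ae A" for A
  proof (rule ccontr)
    assume "\<not> ?thesis"
    then have E: "{x \<in> P. A x} = {}" by blast
    show False using that emp unfolding ae_def E by simp
  qed
  have ae_neg: "ae (\<lambda>x. \<not> A x)" if "\<not> ae A" for A
  proof -
    have "{x \<in> P. A x} \<subseteq> P" by blast
    then have "P - {x \<in> P. A x} \<in> U" using uf_compl that unfolding ae_def by blast
    moreover have "P - {x \<in> P. A x} = {x \<in> P. \<not> A x}" by blast
    ultimately show ?thesis unfolding ae_def by simp
  qed
  have ae_true: "ae (\<lambda>x. True)" using uf_P unfolding ae_def by simp
  have fineo: "ae (\<lambda>x. t \<alpha> \<in> x)" if "\<alpha> < l" for \<alpha>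
    using fine that unfolding ae_def X_def by blast
  define ords where "ords x = {\<xi>. \<xi> < l \<and> t \<xi> \<in> x}" for x
  have ords_small: "card_lt (ords x) {..<k}" if "x \<in> P" for x
  proof -
    have "inj_on t (ords x)" using inj_on_subset[OF t_inj, of "ords x"] by (auto simp: ords_def)
    then have "card_le (ords x) x" unfolding card_le_def
      by (intro exI[of _ t]) (auto simp: ords_def)
    moreover have "card_lt x {..<k}" using that unfolding P_def P_kappa_def by blast
    ultimately show ?thesis by (rule card_le_lt_trans)
  qed
  have bounded: "\<exists>\<beta><l. \<forall>\<xi>\<in>ords x. \<xi> < \<beta>" if "x \<in> P" for x
  proof (rule ccontr)
    assume "\<not> ?thesis"
    then have "cofinal_in (ords x) l" unfolding cofinal_in_def ords_def by (auto simp: not_less) (meson not_le)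
    then have "card_le {..<l} (ords x)" using lreg unfolding regular_cardinal_def by blast
    then have "card_lt {..<l} {..<k}" using ords_small[OF that] by (rule card_le_lt_trans)
    then show False using kl_le unfolding card_lt_def by blast
  qed
  define S where "S = {g. (\<forall>\<alpha><l. ae (\<lambda>x. \<alpha> < g x)) \<and> ae (\<lambda>x. g x < l)}"
  define R where "R = {(h, g). ae (\<lambda>x. h x < (g x :: 'o))}"
  have wfR: "wf R"
    unfolding wf_iff_no_infinite_down_chain
  proof
    assume "\<exists>f. \<forall>i. (f (Suc i), f i) \<in> R"
    then obtain f where "\<forall>i. (f (Suc i), f i) \<in> R" by blast
    then have f: "\<And>i. ae (\<lambda>x. f (Suc i) x < f i x)" unfolding R_def by auto
    define A where "A i = {x \<in> P. f (Suc i) x < f i x}" for i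
    have AU: "range A \<subseteq> U" using f unfolding A_def ae_def by auto
    have c1: "card_le (range A) {..<k}"
      by (rule card_le_trans[OF card_le_range_nat[of A] card_le_nat_inf[OF k_inf]])
    have c2: "\<not> card_le {..<k} (range A)"
      using card_le_trans[OF _ card_le_range_nat[of A]] ku unfolding uncountable_ord_def by blast
    have "\<Inter>(range A) \<in> U" using comp AU c1 c2 unfolding complete_filter_def card_lt_def by blast
    then obtain x where "x \<in> \<Inter>(range A)" using emp by (metis ex_in_conv)
    then have "\<And>i. f (Suc i) x < f i x" unfolding A_def by auto
    then have "\<exists>s. \<forall>i. (s (Suc i), s i) \<in> {(a, b::'o). a < b}"
    proof -
      have fi: "\<forall>i. (f (Suc i) x, f i x) \<in> {(a, b::'o). a < b}"
        using \<open>\<And>i. f (Suc i) x < f i x\<close> by simp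
      show ?thesis by (rule exI[where x="\<lambda>i. f i x"]) (use fi in simp)
    qed
    then show False using wellorder_class.wf[where 'a='o] unfolding wf_iff_no_infinite_down_chain by blast
  qed
  have g0: "S \<noteq> {}"
  proof -
    define g0 where "g0 x = (SOME \<beta>. \<beta> < l \<and> (\<forall>\<xi>\<in>ords x. \<xi> < \<beta>))" for x
    have g0p: "g0 x < l \<and> (\<forall>\<xi>\<in>ords x. \<xi> < g0 x)" if "x \<in> P" for x
      using someI_ex[OF bounded[OF that]] unfolding g0_def by blast
    have "g0 \<in> S" unfolding S_def
    proof (intro CollectI conjI allI impI)
      fix \<alpha> :: 'o assume a: "\<alpha> < l"
      show "ae (\<lambda>x. \<alpha> < g0 x)"
        by (rule ae_mono[OF fineo[OF a]]) (use g0p a in \<open>auto simp: ords_def\<close>)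
    next
      show "ae (\<lambda>x. g0 x < l)" by (rule ae_mono[OF ae_true]) (use g0p in auto)
    qed
    then show ?thesis by blast
  qed
  obtain g where gS: "g \<in> S" and gmin: "\<And>h. (h, g) \<in> R \<Longrightarrow> h \<notin> S"
    using wfR g0 unfolding wf_eq_minimal by blast
  have g_above: "ae (\<lambda>x. \<alpha> < g x)" if "\<alpha> < l" for \<alpha> using gS that unfolding S_def by blast
  have g_lt: "ae (\<lambda>x. g x < l)" using gS unfolding S_def by blast
  have bnd: "\<exists>\<alpha><l. ae (\<lambda>x. h x \<le> \<alpha>)" if "ae (\<lambda>x. h x < g x)" for h
  proof -
    have "h \<notin> S" using gmin that unfolding R_def by blast
    moreover have "ae (\<lambda>x. h x < l)" by (rule ae_mono[OF ae_conj[OF that g_lt]]) auto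
    ultimately obtain \<alpha> where a: "\<alpha> < l" "\<not> ae (\<lambda>x. \<alpha> < h x)" unfolding S_def by blast
    have "ae (\<lambda>x. h x \<le> \<alpha>)" by (rule ae_mono[OF ae_neg[OF a(2)]]) (simp add: not_less)
    then show ?thesis using a(1) by blast
  qed
  obtain \<alpha>0 where \<alpha>0: "\<alpha>0 < l" using lne by blast
  have g_limit: "ae (\<lambda>x. is_limit (g x))"
  proof (rule ccontr)
    assume "\<not> ?thesis"
    then have nl: "ae (\<lambda>x. \<not> is_limit (g x))" by (rule ae_neg)
    define h where "h x = (SOME b. b < g x \<and> \<not> (\<exists>c. b < c \<and> c < g x))" for x
    have hp: "ae (\<lambda>x. h x < g x \<and> \<not> (\<exists>c. h x < c \<and> c < g x))"
    proof (rule ae_mono[OF ae_conj[OF nl g_above[OF \<alpha>0]]])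
      fix x assume "\<not> is_limit (g x) \<and> \<alpha>0 < g x"
      then have "\<exists>b. b < g x \<and> \<not> (\<exists>c. b < c \<and> c < g x)" unfolding is_limit_def by blast
      then show "h x < g x \<and> \<not> (\<exists>c. h x < c \<and> c < g x)" unfolding h_def by (rule someI_ex)
    qed
    have "ae (\<lambda>x. h x < g x)" by (rule ae_mono[OF hp]) auto
    then obtain \<alpha> where "\<alpha> < l" and ha: "ae (\<lambda>x. h x \<le> \<alpha>)" using bnd by blast
    obtain \<alpha>' where "\<alpha> < \<alpha>'" "\<alpha>' < l" using lim[OF \<open>\<alpha> < l\<close>] by blast
    have "ae (\<lambda>x. (h x < g x \<and> \<not> (\<exists>c. h x < c \<and> c < g x)) \<and> h x \<le> \<alpha> \<and> \<alpha>' < g x)"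
      by (rule ae_conj[OF hp ae_conj[OF ha g_above[OF \<open>\<alpha>' < l\<close>]]])
    then obtain x where x: "(h x < g x \<and> \<not> (\<exists>c. h x < c \<and> c < g x)) \<and> h x \<le> \<alpha> \<and> \<alpha>' < g x"
      using ae_ex by blast
    then have "h x < \<alpha>'" using \<open>\<alpha> < \<alpha>'\<close> by (meson le_less_trans)
    then show False using x by blast
  qed
  define C where "C x = {\<xi> \<in> ords x. \<xi> < g x}" for x
  have g_cf: "ae (\<lambda>x. cofinal_in (C x) (g x))"
  proof (rule ccontr)
    assume "\<not> ?thesis"
    then have nc: "ae (\<lambda>x. \<not> cofinal_in (C x) (g x))" by (rule ae_neg)
    define h where "h x = (SOME b. b < g x \<and> (\<forall>c\<in>C x. c < b))" for x
    have hp: "ae (\<lambda>x. h x < g x \<and> (\<forall>c\<in>C x. c < h x))"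
    proof (rule ae_mono[OF nc])
      fix x assume "\<not> cofinal_in (C x) (g x)"
      then have "\<exists>b. b < g x \<and> (\<forall>c\<in>C x. c < b)" unfolding cofinal_in_def C_def by (auto simp: not_le)
      then show "h x < g x \<and> (\<forall>c\<in>C x. c < h x)" unfolding h_def by (rule someI_ex)
    qed
    have "ae (\<lambda>x. h x < g x)" by (rule ae_mono[OF hp]) auto
    then obtain \<alpha> where "\<alpha> < l" and ha: "ae (\<lambda>x. h x \<le> \<alpha>)" using bnd by blast
    obtain \<alpha>' where "\<alpha> < \<alpha>'" "\<alpha>' < l" using lim[OF \<open>\<alpha> < l\<close>] by blast
    have "ae (\<lambda>x. (h x < g x \<and> (\<forall>c\<in>C x. c < h x)) \<and> h x \<le> \<alpha> \<and> \<alpha>' < g x \<and> t \<alpha>' \<in> x)"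
      by (rule ae_conj[OF hp ae_conj[OF ha ae_conj[OF g_above[OF \<open>\<alpha>' < l\<close>] fineo[OF \<open>\<alpha>' < l\<close>]]]])
    then obtain x where x: "(h x < g x \<and> (\<forall>c\<in>C x. c < h x)) \<and> h x \<le> \<alpha> \<and> \<alpha>' < g x \<and> t \<alpha>' \<in> x"
      using ae_ex by blast
    then have "\<alpha>' \<in> C x" using \<open>\<alpha>' < l\<close> unfolding C_def ords_def by auto
    then have "\<alpha>' < h x" using x by blast
    then have "\<alpha>' < \<alpha>" using x by (meson less_le_trans)
    then show False using \<open>\<alpha> < \<alpha>'\<close> by simp
  qed
  have good: "ae (\<lambda>x. g x < l \<and> is_limit (g x) \<and> cf_less (g x) k)"
  proof (rule ae_mono[OF ae_conj[OF g_lt ae_conj[OF g_limit g_cf]]])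
    fix x assume x: "x \<in> P" and gx: "g x < l \<and> is_limit (g x) \<and> cofinal_in (C x) (g x)"
    have "card_lt (C x) {..<k}"
      by (rule card_le_lt_trans[OF card_le_subset ords_small[OF x]]) (auto simp: C_def)
    then show "g x < l \<and> is_limit (g x) \<and> cf_less (g x) k" using gx unfolding cf_less_def by blast
  qed
  define NS where "NS a F \<longleftrightarrow> (\<forall>x\<in>level T a. F x \<in> below T a \<and> tree_less (F x) x) \<and>
     (\<forall>x\<in>level T a. \<forall>y\<in>level T a. x \<noteq> y \<longrightarrow> \<not> tree_less (F x) y \<or> \<not> tree_less (F y) x)" for a F
  define Fx where "Fx x = (SOME F. NS (g x) F)" for x
  have Fx_ns: "NS (g x) (Fx x)" if "g x < l" "is_limit (g x)" "cf_less (g x) k" for x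
  proof -
    have "level_nonstationary T (g x)" using reg that by blast
    then have "\<exists>F. NS (g x) F" unfolding level_nonstationary_def NS_def .
    then show ?thesis unfolding Fx_def by (rule someI_ex)
  qed
  define B where "B = cofinal_branches T l"
  have restr_lev: "b |` {..<a} \<in> level T a" if "b \<in> B" "a < l" for b a
    using that unfolding B_def cofinal_branches_def level_def by auto
  define hb where "hb b x = (SOME \<delta>. \<delta> < g x \<and> Fx x (b |` {..<g x}) = b |` {..<\<delta>})" for b x
  have hb_prop: "ae (\<lambda>x. hb b x < g x \<and> Fx x (b |` {..<g x}) = b |` {..<hb b x})" if "b \<in> B" for b
  proof (rule ae_mono[OF good])
    fix x assume "g x < l \<and> is_limit (g x) \<and> cf_less (g x) k"
    then have ns: "NS (g x) (Fx x)" and gl: "g x < l" using Fx_ns by auto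
    let ?y = "b |` {..<g x}"
    have y: "?y \<in> level T (g x)" using restr_lev[OF that gl] .
    then have "Fx x ?y \<in> below T (g x)" and tl: "tree_less (Fx x ?y) ?y" using ns unfolding NS_def by auto
    then obtain \<delta> where "\<delta> < g x" and dd: "dom (Fx x ?y) = {..<\<delta>}" unfolding below_def by auto
    have eqF: "Fx x ?y = b |` {..<\<delta>}"
    proof
      fix z
      show "Fx x ?y z = (b |` {..<\<delta>}) z"
      proof (cases "z \<in> {..<\<delta>}")
        case True
        then have "z \<in> dom (Fx x ?y)" using dd by simp
        then have "Fx x ?y z = ?y z" using tl unfolding tree_less_def map_le_def by blast
        moreover have "z < g x" using True \<open>\<delta> < g x\<close> by (meson lessThan_iff less_trans)
        ultimately show ?thesis using True by (simp add: restrict_map_def)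
      next
        case False
        then have "z \<notin> dom (Fx x ?y)" using dd by simp
        then show ?thesis using False by (simp add: domIff restrict_map_def)
      qed
    qed
    then have "\<exists>\<delta>. \<delta> < g x \<and> Fx x ?y = b |` {..<\<delta>}" using \<open>\<delta> < g x\<close> by blast
    then show "hb b x < g x \<and> Fx x ?y = b |` {..<hb b x}" unfolding hb_def by (rule someI_ex)
  qed
  define ab where "ab b = (SOME \<alpha>. \<alpha> < l \<and> ae (\<lambda>x. hb b x \<le> \<alpha>))" for b
  have ab: "ab b < l \<and> ae (\<lambda>x. hb b x \<le> ab b)" if "b \<in> B" for b
  proof -
    have "ae (\<lambda>x. hb b x < g x)" by (rule ae_mono[OF hb_prop[OF that]]) auto
    then have "\<exists>\<alpha>. \<alpha> < l \<and> ae (\<lambda>x. hb b x \<le> \<alpha>)" using bnd by blast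
    then show ?thesis unfolding ab_def by (rule someI_ex)
  qed
  define \<Phi> where "\<Phi> b = (ab b, b |` {..<ab b})" for b
  define \<Sigma> where "\<Sigma> = (SIGMA a:{..<l}. level T a)"
  have not_inj: "\<not> inj_on \<Phi> B"
  proof
    assume inj: "inj_on \<Phi> B"
    have "\<Phi> ` B \<subseteq> \<Sigma>" using ab restr_lev unfolding \<Phi>_def \<Sigma>_def by auto
    then have "card_le B \<Sigma>" using inj unfolding card_le_def by blast
    moreover have "card_le \<Sigma> ({..<l} \<times> {..<l})"
    proof -
      define e where "e a = (SOME f. inj_on f (level T a) \<and> f ` level T a \<subseteq> {..<l})" for a
      have e: "inj_on (e a) (level T a) \<and> e a ` level T a \<subseteq> {..<l}" if "a < l" for a
      proof -
        have "\<exists>f. inj_on f (level T a) \<and> f ` level T a \<subseteq> {..<l}" using levs that unfolding card_le_def by blast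
        then show ?thesis unfolding e_def by (rule someI_ex)
      qed
      show ?thesis unfolding card_le_def
      proof (intro exI[of _ "\<lambda>(a, f). (a, e a f)"] conjI)
        show "inj_on (\<lambda>(a, f). (a, e a f)) \<Sigma>"
        proof (rule inj_onI)
          fix p q assume p: "p \<in> \<Sigma>" and q: "q \<in> \<Sigma>" and pq: "(\<lambda>(a, f). (a, e a f)) p = (\<lambda>(a, f). (a, e a f)) q"
          obtain a f where "p = (a, f)" by (cases p)
          obtain a' f' where "q = (a', f')" by (cases q)
          then show "p = q" using p q pq \<open>p = (a, f)\<close> e unfolding \<Sigma>_def inj_on_def by auto
        qed
        show "(\<lambda>(a, f). (a, e a f)) ` \<Sigma> \<subseteq> {..<l} \<times> {..<l}" using e unfolding \<Sigma>_def by auto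
      qed
    qed
    ultimately have "card_le B ({..<l} \<times> {..<l})" by (rule card_le_trans)
    then have "card_le B {..<l}" using card_le_square[OF l_inf] by (rule card_le_trans)
    then show False using br unfolding card_lt_def B_def by blast
  qed
  obtain b b' where bB: "b \<in> B" "b' \<in> B" and neq: "b \<noteq> b'" and eq: "\<Phi> b = \<Phi> b'"
    using not_inj unfolding inj_on_def by blast
  define \<alpha> where "\<alpha> = ab b"
  have ab': "ab b' = \<alpha>" and rr: "b |` {..<\<alpha>} = b' |` {..<\<alpha>}" using eq unfolding \<Phi>_def \<alpha>_def by auto
  have db: "dom b = {..<l}" "dom b' = {..<l}" using bB unfolding B_def cofinal_branches_def by auto
  obtain z where "b z \<noteq> b' z" using neq by (auto simp: fun_eq_iff)
  then have "z \<in> dom b \<or> z \<in> dom b'" by (auto simp: domIff)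
  then have "z < l" using db by auto
  have hb1: "ae (\<lambda>x. hb b x \<le> \<alpha>)" using ab[OF bB(1)] unfolding \<alpha>_def by blast
  have hb2: "ae (\<lambda>x. hb b' x \<le> \<alpha>)" using ab[OF bB(2)] unfolding ab' by blast
  have "ae (\<lambda>x. (g x < l \<and> is_limit (g x) \<and> cf_less (g x) k) \<and> z < g x \<and>
       (hb b x < g x \<and> Fx x (b |` {..<g x}) = b |` {..<hb b x}) \<and>
       (hb b' x < g x \<and> Fx x (b' |` {..<g x}) = b' |` {..<hb b' x}) \<and> hb b x \<le> \<alpha> \<and> hb b' x \<le> \<alpha>)"
    by (rule ae_conj[OF good ae_conj[OF g_above[OF \<open>z < l\<close>] ae_conj[OF hb_prop[OF bB(1)]
          ae_conj[OF hb_prop[OF bB(2)] ae_conj[OF hb1 hb2]]]]])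
  then obtain x where x: "(g x < l \<and> is_limit (g x) \<and> cf_less (g x) k) \<and> z < g x \<and>
       (hb b x < g x \<and> Fx x (b |` {..<g x}) = b |` {..<hb b x}) \<and>
       (hb b' x < g x \<and> Fx x (b' |` {..<g x}) = b' |` {..<hb b' x}) \<and> hb b x \<le> \<alpha> \<and> hb b' x \<le> \<alpha>"
    using ae_ex by blast
  let ?y = "b |` {..<g x}"
  let ?y' = "b' |` {..<g x}"
  have xF1: "Fx x ?y = b |` {..<hb b x}" using x by (elim conjE) assumption
  have xF2: "Fx x ?y' = b' |` {..<hb b' x}" using x by (elim conjE) assumption
  have xa1: "hb b x \<le> \<alpha>" using x by (elim conjE) assumption
  have xa2: "hb b' x \<le> \<alpha>" using x by (elim conjE) assumption
  have gxl: "g x < l" using x by (elim conjE) assumption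
  have gxlim: "is_limit (g x)" using x by (elim conjE) assumption
  have gxcf: "cf_less (g x) k" using x by (elim conjE) assumption
  have xz: "z < g x" using x by (elim conjE) assumption
  have xh1: "hb b x < g x" using x by (elim conjE) assumption
  have xh2: "hb b' x < g x" using x by (elim conjE) assumption
  have ns: "NS (g x) (Fx x)" by (rule Fx_ns[OF gxl gxlim gxcf])
  have y: "?y \<in> level T (g x)" "?y' \<in> level T (g x)"
    by (rule restr_lev[OF bB(1) gxl]) (rule restr_lev[OF bB(2) gxl])
  have "?y \<noteq> ?y'"
  proof
    assume "?y = ?y'"
    then have "?y z = ?y' z" by simp
    then show False using xz \<open>b z \<noteq> b' z\<close> by (simp add: restrict_map_def)
  qed
  have rle: "c |` {..<\<delta>} = (c |` {..<\<alpha>}) |` {..<\<delta>}" if "\<delta> \<le> \<alpha>" for c :: "'o \<Rightarrow> 'a option" and \<delta>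
    using that by (intro ext) (auto simp: restrict_map_def dest: order.strict_trans2)
  have rl: "tree_less (c |` {..<\<delta>}) (c |` {..<\<gamma>})"
    if "dom c = {..<l}" "\<delta> < \<gamma>" "\<gamma> < l" for c :: "'o \<Rightarrow> 'a option" and \<delta> \<gamma>
  proof -
    have ml: "c |` {..<\<delta>} \<subseteq>\<^sub>m c |` {..<\<gamma>}" using that(2)
      by (auto simp: map_le_def restrict_map_def dest: less_trans split: if_splits)
    have "\<delta> < l" using that(2,3) by (rule less_trans)
    then have dd: "dom (c |` {..<\<delta>}) = {..<\<delta>}" "dom (c |` {..<\<gamma>}) = {..<\<gamma>}" using that by auto
    moreover have "c |` {..<\<delta>} \<noteq> c |` {..<\<gamma>}"
    proof
      assume "c |` {..<\<delta>} = c |` {..<\<gamma>}"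
      then have "{..<\<delta>} = {..<\<gamma>}" using dd by metis
      then show False using that(2) by simp
    qed
    ultimately show ?thesis using ml unfolding tree_less_def by blast
  qed
  have "Fx x ?y = b |` {..<hb b x}" by (rule xF1)
  also have "\<dots> = (b |` {..<\<alpha>}) |` {..<hb b x}" by (rule rle[OF xa1])
  also have "\<dots> = (b' |` {..<\<alpha>}) |` {..<hb b x}" by (simp only: rr)
  also have "\<dots> = b' |` {..<hb b x}" by (rule rle[OF xa1, symmetric])
  finally have F1: "Fx x ?y = b' |` {..<hb b x}" .
  have "Fx x ?y' = b' |` {..<hb b' x}" by (rule xF2)
  also have "\<dots> = (b' |` {..<\<alpha>}) |` {..<hb b' x}" by (rule rle[OF xa2])
  also have "\<dots> = (b |` {..<\<alpha>}) |` {..<hb b' x}" by (simp only: rr)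
  also have "\<dots> = b |` {..<hb b' x}" by (rule rle[OF xa2, symmetric])
  finally have F2: "Fx x ?y' = b |` {..<hb b' x}" .
  have "tree_less (Fx x ?y) ?y'" unfolding F1 by (rule rl[OF db(2) xh1 gxl])
  moreover have "tree_less (Fx x ?y') ?y" unfolding F2 by (rule rl[OF db(1) xh2 gxl])
  moreover have ns2: "\<forall>u\<in>level T (g x). \<forall>v\<in>level T (g x). u \<noteq> v \<longrightarrow>
      \<not> tree_less (Fx x u) v \<or> \<not> tree_less (Fx x v) u"
    using ns unfolding NS_def by (rule conjunct2)
  have "\<not> tree_less (Fx x ?y) ?y' \<or> \<not> tree_less (Fx x ?y') ?y"
    using bspec[OF bspec[OF ns2 y(1)] y(2)] \<open>?y \<noteq> ?y'\<close> by (rule mp)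
  ultimately show False by blast
qed

end
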